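(* Let $Y(\mathbb{R}^n)$ be a translation-invariant Banach function space and $\varphi$ a nonincreasing function such that $\varphi(r)\to0$ as $r\to+\infty$ and $r\varphi(r)$ is nondecreasing for $r\ge1$. Suppose $w:\mathbb{R}^n\to[0,\infty]$ is a weight with $w,1/w\in L^\infty_{\rm loc}(\mathbb{R}^n)$ and there exist $C_0,C_1>0$, $\gamma>0$ and $\theta\in\mathbb{R}^n$ with $|\theta|=1$ such that \[ C_0\exp(|x|\varphi(|x|))\le w(x)\le C_1\exp(|x|\varphi(|x|))\quad\text{whenever } \Big|\frac{x}{|x|}-\theta\Big|<\gamma,\ |x|\ge1. \] Then $X(\mathbb{R}^n)=Y(\mathbb{R}^n,w)$ satisfies the weak doubling property and there exists a constant $C>0$ such that $\|\chi_{B(0,R)}\|_{X(\mathbb{R}^n)}\ge C\exp(R\varphi(R))$ for all sufficiently large $R$.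
   Context: Banach function spaces: let $\mathfrak{M}^+(\mathbb{R}^n)$ be the set of measurable functions with values in $[0,\infty]$. A Banach function norm $\rho:\mathfrak{M}^+\to[0,\infty]$ satisfies, for all $f,g,f_j\in\mathfrak{M}^+$, $a\ge0$, measurable $E$: (A1) $\rho(f)=0\iff f=0$ a.e., $\rho(af)=a\rho(f)$, $\rho(f+g)\le\rho(f)+\rho(g)$; (A2) $0\le g\le f$ a.e. implies $\rho(g)\le\rho(f)$; (A3) $0\le f_j\uparrow f$ a.e. implies $\rho(f_j)\uparrow\rho(f)$; (A4) $|E|<\infty$ implies $\rho(\chi_E)<\infty$; (A5) $|E|<\infty$ implies $\int_Ef\le C_E\rho(f)$ with $C_E$ independent of $f$. $Y(\mathbb{R}^n)$ is the set of measurable complex $f$ with $\rho(|f|)<\infty$, $\|f\|_Y=\rho(|f|)$. $Y$ is translation-invariant if $\|u(\cdot-y)\|_Y=\|u\|_Y$ for all $y$, $u\in Y$. A weight is a measurable $w$ with $0<w<\infty$ a.e.; $Y(\mathbb{R}^n,w)=\{f: fw\in Y\}$ with $\|f\|_{Y(\mathbb{R}^n,w)}=\|fw\|_Y$. Weak doubling property: a Banach function space $Z(\mathbb{R}^n)$ has it if there is $\tau>1$ with $\liminf_{R\to\infty}\big(\inf_{y\in\mathbb{R}^n}\|\chi_{B(y,\tau R)}\|_{Z}/\|\chi_{B(y,R)}\|_{Z}\big)<\infty$, where $B(y,R)$ is the open ball of radius $R$ centered at $y$. *)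

theory Defs
  imports "HOL-Analysis.Analysis"
begin

text \<open>Banach function norms on R^n, modelled on a Euclidean space 'a with Lebesgue
measure; M+ is the set of Lebesgue measurable functions 'a => [0,\<infinity>] (ennreal).\<close>

definition banach_function_norm :: "(('a::euclidean_space \<Rightarrow> ennreal) \<Rightarrow> ennreal) \<Rightarrow> bool" where
  "banach_function_norm \<rho> \<longleftrightarrow>
    \<comment> \<open>(A1)\<close>
    (\<forall>f \<in> borel_measurable lebesgue. \<rho> f = 0 \<longleftrightarrow> (AE x in lebesgue. f x = 0)) \<and>
    (\<forall>f \<in> borel_measurable lebesgue. \<forall>a::real. a \<ge> 0 \<longrightarrow>
        \<rho> (\<lambda>x. ennreal a * f x) = ennreal a * \<rho> f) \<and>
    (\<forall>f \<in> borel_measurable lebesgue. \<forall>g \<in> borel_measurable lebesgue.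
        \<rho> (\<lambda>x. f x + g x) \<le> \<rho> f + \<rho> g) \<and>
    \<comment> \<open>(A2)\<close>
    (\<forall>f \<in> borel_measurable lebesgue. \<forall>g \<in> borel_measurable lebesgue.
        (AE x in lebesgue. g x \<le> f x) \<longrightarrow> \<rho> g \<le> \<rho> f) \<and>
    \<comment> \<open>(A3)\<close>
    (\<forall>F f. (\<forall>j. F j \<in> borel_measurable lebesgue) \<longrightarrow> f \<in> borel_measurable lebesgue \<longrightarrow>
        (AE x in lebesgue. incseq (\<lambda>j. F j x) \<and> (\<lambda>j. F j x) \<longlonglongrightarrow> f x) \<longrightarrow>
        (\<lambda>j. \<rho> (F j)) \<longlonglongrightarrow> \<rho> f) \<and>
    \<comment> \<open>(A4)\<close>
    (\<forall>E \<in> sets lebesgue. emeasure lebesgue E < \<infinity> \<longrightarrow> \<rho> (indicator E) < \<infinity>) \<and>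
    \<comment> \<open>(A5)\<close>
    (\<forall>E \<in> sets lebesgue. emeasure lebesgue E < \<infinity> \<longrightarrow>
        (\<exists>C::real. \<forall>f \<in> borel_measurable lebesgue.
            set_nn_integral lebesgue E f \<le> ennreal C * \<rho> f))"

definition Ynorm :: "(('a::euclidean_space \<Rightarrow> ennreal) \<Rightarrow> ennreal) \<Rightarrow> ('a \<Rightarrow> complex) \<Rightarrow> ennreal" where
  "Ynorm \<rho> f = \<rho> (\<lambda>x. ennreal (cmod (f x)))"

definition in_Y :: "(('a::euclidean_space \<Rightarrow> ennreal) \<Rightarrow> ennreal) \<Rightarrow> ('a \<Rightarrow> complex) \<Rightarrow> bool" where
  "in_Y \<rho> f \<longleftrightarrow> f \<in> borel_measurable lebesgue \<and> Ynorm \<rho> f < \<infinity>"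

definition translation_invariant :: "(('a::euclidean_space \<Rightarrow> ennreal) \<Rightarrow> ennreal) \<Rightarrow> bool" where
  "translation_invariant \<rho> \<longleftrightarrow>
     (\<forall>u y. in_Y \<rho> u \<longrightarrow> Ynorm \<rho> (\<lambda>x. u (x - y)) = Ynorm \<rho> u)"

definition is_weight :: "('a::euclidean_space \<Rightarrow> ennreal) \<Rightarrow> bool" where
  "is_weight w \<longleftrightarrow> w \<in> borel_measurable lebesgue \<and> (AE x in lebesgue. 0 < w x \<and> w x < \<infinity>)"

definition Linf_loc :: "('a::euclidean_space \<Rightarrow> ennreal) \<Rightarrow> bool" where
  "Linf_loc g \<longleftrightarrow> (\<forall>K. compact K \<longrightarrow> (\<exists>M::real. AE x in lebesgue. x \<in> K \<longrightarrow> g x \<le> ennreal M))"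

text \<open>Weak doubling property of a Banach function space Z, given through its function norm
nu on M+: ||chi_E||_Z = nu (indicator E).\<close>
definition weak_doubling :: "(('a::euclidean_space \<Rightarrow> ennreal) \<Rightarrow> ennreal) \<Rightarrow> bool" where
  "weak_doubling \<nu> \<longleftrightarrow> (\<exists>\<tau>::real. \<tau> > 1 \<and>
     Liminf at_top (\<lambda>R::real. INF y. \<nu> (indicator (ball y (\<tau> * R))) / \<nu> (indicator (ball y R))) < \<infinity>)"

end

theory Submission
  imports Defs
begin

lemma ball_leb: "ball (y::'a::euclidean_space) r \<in> sets lebesgue"
  by simp

lemma ball_fin: "emeasure lebesgue (ball (y::'a::euclidean_space) r) < \<infinity>"
  using emeasure_bounded_finite by auto

lemma ball_pos: "0 < r \<Longrightarrow> 0 < emeasure lebesgue (ball (y::'a::euclidean_space) r)"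
  by (metis Sigma_Algebra.measure_def content_ball_gt_0_iff
    emeasure_neq_0_sets enn2real_0 measure_completion nless_le
    not_gr_zero)

lemma div_le: "(a::ennreal) < \<infinity> \<Longrightarrow> 0 < b \<Longrightarrow> a \<le> ennreal K * b \<Longrightarrow> a / b \<le> ennreal K"
  by (simp add: divide_le_posI_ennreal mult.commute)

lemma ind_meas: "(indicator (ball (y::'a::euclidean_space) r) :: _ \<Rightarrow> ennreal) \<in> borel_measurable lebesgue"
  by (rule borel_measurable_indicator) (rule ball_leb)

lemma bfn_hom: "banach_function_norm \<rho> \<Longrightarrow> f \<in> borel_measurable lebesgue \<Longrightarrow> 0 \<le> a \<Longrightarrow>
   \<rho> (\<lambda>x. ennreal a * f x) = ennreal a * \<rho> f"
  by (simp add: banach_function_norm_def)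

lemma bfn_mono: "banach_function_norm \<rho> \<Longrightarrow> f \<in> borel_measurable lebesgue \<Longrightarrow>
   g \<in> borel_measurable lebesgue \<Longrightarrow> (\<And>x. g x \<le> f x) \<Longrightarrow> \<rho> g \<le> \<rho> f"
proof -
  assume b: "banach_function_norm \<rho>" and m: "f \<in> borel_measurable lebesgue" "g \<in> borel_measurable lebesgue"
    and le: "\<And>x. g x \<le> f x"
  have "AE x in lebesgue. g x \<le> f x" using le by simp
  moreover have h: "\<forall>f\<in>borel_measurable lebesgue. \<forall>g\<in>borel_measurable lebesgue.
        (AE x in lebesgue. g x \<le> f x) \<longrightarrow> \<rho> g \<le> \<rho> f"
    using b unfolding banach_function_norm_def by (elim conjE) assumption
  ultimately show ?thesis using m by simp
qed

lemma bfn_sub: "banach_function_norm \<rho> \<Longrightarrow> f \<in> borel_measurable lebesgue \<Longrightarrow>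
   g \<in> borel_measurable lebesgue \<Longrightarrow> \<rho> (\<lambda>x. f x + g x) \<le> \<rho> f + \<rho> g"
  by (simp add: banach_function_norm_def)

lemma bfn_zero: "banach_function_norm \<rho> \<Longrightarrow> \<rho> (\<lambda>x. 0) = 0"
  unfolding banach_function_norm_def by simp

lemma bfn_ball_fin: "banach_function_norm \<rho> \<Longrightarrow> \<rho> (indicator (ball (y::'a::euclidean_space) r)) < \<infinity>"
proof -
  assume b: "banach_function_norm \<rho>"
  have h: "\<forall>E \<in> sets lebesgue. emeasure lebesgue E < \<infinity> \<longrightarrow> \<rho> (indicator E) < \<infinity>"
    using b unfolding banach_function_norm_def by (elim conjE) assumption
  show ?thesis using h ball_leb[of y r] ball_fin[of y r] by blast
qed

lemma bfn_ball_pos: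
  assumes b: "banach_function_norm \<rho>" and r: "0 < r"
  shows "0 < \<rho> (indicator (ball (y::'a::euclidean_space) r))"
proof (rule ccontr)
  assume "\<not> 0 < \<rho> (indicator (ball y r))"
  hence "\<rho> (indicator (ball y r)) = 0" by simp
  hence "AE x in lebesgue. (indicator (ball y r) x :: ennreal) = 0"
  proof -
    have h: "\<forall>f \<in> borel_measurable lebesgue. \<rho> f = 0 \<longleftrightarrow> (AE x in lebesgue. f x = 0)"
      using b unfolding banach_function_norm_def by (elim conjE) assumption
    show ?thesis using iffD1[OF bspec[OF h ind_meas[of y r]] \<open>\<rho> (indicator (ball y r)) = 0\<close>] .
  qed
  hence "AE x in lebesgue. x \<notin> ball y r"
    by eventually_elim (auto simp: indicator_def split: if_splits)
  moreover have "(AE x in lebesgue. x \<notin> ball y r) \<longleftrightarrow> emeasure lebesgue (ball y r) = 0"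
    by (rule AE_iff_measurable[OF ball_leb]) auto
  ultimately have "emeasure lebesgue (ball y r) = 0" by blast
  thus False using ball_pos[OF r, of y] by (simp only: less_irrefl)
qed

lemma e1_ind: "(\<lambda>x. ennreal (cmod (indicator S x :: complex))) = indicator S"
  by (rule ext) (simp split: split_indicator)

lemma e2_ind: "(\<lambda>x. (indicator (ball (0::'a::euclidean_space) r) (x - y)::complex)) = indicator (ball y r)"
  by (rule ext) (simp add: indicator_def dist_norm norm_minus_commute)

lemma bfn_trans:
  assumes b: "banach_function_norm \<rho>" and ti: "translation_invariant \<rho>"
  shows "\<rho> (indicator (ball (y::'a::euclidean_space) r)) = \<rho> (indicator (ball 0 r))"
proof -
  define u where "u = (indicator (ball (0::'a) r) :: 'a \<Rightarrow> complex)"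
  have e1: "(\<lambda>x. ennreal (cmod (u x))) = indicator (ball 0 r)"
    unfolding u_def by (rule e1_ind)
  have e2: "(\<lambda>x. ennreal (cmod (u (x - y)))) = indicator (ball y r)"
    unfolding u_def using e2_ind[of r y] e1_ind[of "ball y r"] by metis
  have "u \<in> borel_measurable lebesgue" unfolding u_def
    by (rule borel_measurable_indicator) (rule ball_leb)
  moreover have "Ynorm \<rho> u < \<infinity>" unfolding Ynorm_def e1 using bfn_ball_fin[OF b] .
  ultimately have "in_Y \<rho> u" unfolding in_Y_def by blast
  hence "Ynorm \<rho> (\<lambda>x. u (x - y)) = Ynorm \<rho> u" using ti unfolding translation_invariant_def by blast
  thus ?thesis unfolding Ynorm_def e1 e2 .
qed

lemma bfn_sum:
  assumes b: "banach_function_norm \<rho>" and F: "finite F"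
    and m: "\<And>c. c \<in> F \<Longrightarrow> f c \<in> borel_measurable lebesgue"
  shows "\<rho> (\<lambda>x. \<Sum>c\<in>F. f c x) \<le> (\<Sum>c\<in>F. \<rho> (f c))"
  using F m
proof (induction F rule: finite_induct)
  case empty
  then show ?case using bfn_zero[OF b] by simp
next
  case (insert a F)
  have "\<rho> (\<lambda>x. \<Sum>c\<in>insert a F. f c x) = \<rho> (\<lambda>x. f a x + (\<Sum>c\<in>F. f c x))"
    using insert by simp
  also have "\<dots> \<le> \<rho> (f a) + \<rho> (\<lambda>x. \<Sum>c\<in>F. f c x)"
    by (rule bfn_sub[OF b]) (use insert in auto)
  also have "\<dots> \<le> \<rho> (f a) + (\<Sum>c\<in>F. \<rho> (f c))"
    using insert by (intro add_left_mono) auto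
  finally show ?case using insert by simp
qed

lemma cone:
  fixes x \<theta> :: "'a::euclidean_space"
  assumes th: "norm \<theta> = 1" and s: "0 < s" "s < t" and g: "2 * s / t \<le> \<gamma>"
    and x: "norm (x - t *\<^sub>R \<theta>) < s"
  shows "t - s < norm x \<and> norm x < t + s \<and> norm (x /\<^sub>R norm x - \<theta>) < \<gamma>"
proof -
  have nt: "norm (t *\<^sub>R \<theta>) = t" using th s by simp
  have d: "\<bar>norm x - t\<bar> < s"
    using norm_triangle_ineq3[of x "t *\<^sub>R \<theta>"] x nt by linarith
  hence a: "t - s < norm x" "norm x < t + s" by auto
  have apos: "norm x > 0" using a s by linarith
  have eq: "x /\<^sub>R norm x - \<theta> = (1/norm x - 1/t) *\<^sub>R x + (1/t) *\<^sub>R (x - t *\<^sub>R \<theta>)"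
    using s by (simp add: algebra_simps divide_inverse)
  have "norm (x /\<^sub>R norm x - \<theta>) \<le> \<bar>1/norm x - 1/t\<bar> * norm x + (1/t) * norm (x - t *\<^sub>R \<theta>)"
    unfolding eq using s norm_triangle_ineq[of "(1/norm x - 1/t) *\<^sub>R x" "(1/t) *\<^sub>R (x - t *\<^sub>R \<theta>)"]
    by simp
  also have "\<bar>1/norm x - 1/t\<bar> * norm x = \<bar>norm x - t\<bar> / t"
  proof -
    have "\<bar>1/norm x - 1/t\<bar> * norm x = \<bar>(1/norm x - 1/t) * norm x\<bar>" using apos
      by (simp add: abs_mult)
    also have "(1/norm x - 1/t) * norm x = (t - norm x) / t" using apos s
      by (simp add: field_simps)
    finally show ?thesis using s by (simp add: abs_minus_commute)
  qed
  also have "\<bar>norm x - t\<bar> / t + (1/t) * norm (x - t *\<^sub>R \<theta>) < s/t + s/t"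
  proof (rule add_strict_mono)
    show "\<bar>norm x - t\<bar> / t < s / t" using d s by (intro divide_strict_right_mono) auto
    have "norm (x - t *\<^sub>R \<theta>) / t < s / t" using x s by (intro divide_strict_right_mono) auto
    thus "(1/t) * norm (x - t *\<^sub>R \<theta>) < s / t" by simp
  qed
  also have "s/t + s/t = 2 * s / t" by simp
  finally have n: "norm (x /\<^sub>R norm x - \<theta>) < 2 * s / t" .
  have "norm (x /\<^sub>R norm x - \<theta>) < \<gamma>" using n g by (rule less_le_trans)
  with a show ?thesis by blast
qed

lemma bfn_cover:
  fixes \<rho> :: "('a::euclidean_space \<Rightarrow> ennreal) \<Rightarrow> ennreal"
  assumes b: "banach_function_norm \<rho>" and ti: "translation_invariant \<rho>"
  obtains N :: nat where
    "\<And>(y::'a) R. 0 < R \<Longrightarrow> \<rho> (indicator (ball y (2*R))) \<le> of_nat N * \<rho> (indicator (ball 0 R))"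
proof -
  have "compact (cball (0::'a) 2)" by simp
  then obtain F where F: "F \<subseteq> cball 0 2" "finite F" "cball (0::'a) 2 \<subseteq> \<Union>((\<lambda>c. ball c 1) ` F)"
    by (rule compactE_image[where C="cball 0 2" and f="\<lambda>c. ball c 1"]) auto
  show thesis
  proof (rule that[of "card F"])
    fix y :: 'a and R :: real assume R: "0 < R"
    have le: "indicator (ball y (2*R)) x \<le> (\<Sum>c\<in>F. (indicator (ball (y + R *\<^sub>R c) R) x :: ennreal))" for x
    proof (cases "x \<in> ball y (2*R)")
      case True
      have "norm ((1/R) *\<^sub>R (x - y)) = dist y x / R" using R by (simp add: dist_norm norm_minus_commute)
      also have "\<dots> < 2" using True R by (simp add: divide_less_eq)
      finally have "(1/R) *\<^sub>R (x - y) \<in> cball 0 2" by simp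
      then obtain c where c: "c \<in> F" "(1/R) *\<^sub>R (x - y) \<in> ball c 1" using F(3) by blast
      have "dist (y + R *\<^sub>R c) x = norm (R *\<^sub>R ((1/R) *\<^sub>R (x - y) - c))"
        using R by (simp add: dist_norm algebra_simps norm_minus_commute)
      also have "\<dots> = R * dist c ((1/R) *\<^sub>R (x - y))" using R by (simp add: dist_norm norm_minus_commute)
      also have "\<dots> < R * 1" using c(2) R by (intro mult_strict_left_mono) auto
      finally have "x \<in> ball (y + R *\<^sub>R c) R" by simp
      hence "indicator (ball (y + R *\<^sub>R c) R) x = (1::ennreal)" by simp
      moreover have "indicator (ball (y + R *\<^sub>R c) R) x \<le> (\<Sum>c\<in>F. (indicator (ball (y + R *\<^sub>R c) R) x :: ennreal))"
        by (rule member_le_sum[OF c(1)]) (auto simp: F(2))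
      ultimately show ?thesis using True by simp
    next
      case False then show ?thesis by simp
    qed
    have "\<rho> (indicator (ball y (2*R))) \<le> \<rho> (\<lambda>x. \<Sum>c\<in>F. (indicator (ball (y + R *\<^sub>R c) R) x :: ennreal))"
      by (rule bfn_mono[OF b _ ind_meas le]) (intro borel_measurable_sum ind_meas)
    also have "\<dots> \<le> (\<Sum>c\<in>F. \<rho> (indicator (ball (y + R *\<^sub>R c) R)))"
      by (rule bfn_sum[OF b F(2)]) (rule ind_meas)
    also have "\<dots> = (\<Sum>c\<in>F. \<rho> (indicator (ball 0 R)))"
      by (intro sum.cong refl) (rule bfn_trans[OF b ti])
    also have "\<dots> = of_nat (card F) * \<rho> (indicator (ball 0 R))" by simp
    finally show "\<rho> (indicator (ball y (2*R))) \<le> of_nat (card F) * \<rho> (indicator (ball 0 R))" .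
  qed
qed

theorem lemma3p10:
  fixes \<rho> :: "('a::euclidean_space \<Rightarrow> ennreal) \<Rightarrow> ennreal"
    and \<phi> :: "real \<Rightarrow> real"
    and w :: "'a \<Rightarrow> ennreal"
    and C\<^sub>0 C\<^sub>1 \<gamma> :: real and \<theta> :: 'a
  assumes bfn: "banach_function_norm \<rho>"
    and ti: "translation_invariant \<rho>"
    and phi_mono: "\<And>r s. 0 < r \<Longrightarrow> r \<le> s \<Longrightarrow> \<phi> s \<le> \<phi> r"
    and phi_lim: "(\<phi> \<longlongrightarrow> 0) at_top"
    and rphi_mono: "\<And>r s. 1 \<le> r \<Longrightarrow> r \<le> s \<Longrightarrow> r * \<phi> r \<le> s * \<phi> s"
    and weight: "is_weight w"
    and w_loc: "Linf_loc w"
    and winv_loc: "Linf_loc (\<lambda>x. 1 / w x)"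
    and C0: "C\<^sub>0 > 0" and C1: "C\<^sub>1 > 0" and gam: "\<gamma> > 0" and theta: "norm \<theta> = 1"
    and w_bounds: "\<And>x. norm x \<ge> 1 \<Longrightarrow> norm (x /\<^sub>R norm x - \<theta>) < \<gamma> \<Longrightarrow>
          ennreal (C\<^sub>0 * exp (norm x * \<phi> (norm x))) \<le> w x \<and>
          w x \<le> ennreal (C\<^sub>1 * exp (norm x * \<phi> (norm x)))"
  shows "weak_doubling (\<lambda>g. \<rho> (\<lambda>x. g x * w x)) \<and>
    (\<exists>C>0. \<forall>\<^sub>F R in at_top.
       \<rho> (\<lambda>x. indicator (ball 0 R) x * w x) \<ge> ennreal (C * exp (R * \<phi> R)))"
proof -
  have wm: "w \<in> borel_measurable lebesgue" using weight by (simp add: is_weight_def)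
  have mw: "(\<lambda>x. indicator (ball y r) x * w x) \<in> borel_measurable lebesgue" for y :: 'a and r
    by (intro borel_measurable_times_ennreal ind_meas wm)
  have mc: "(\<lambda>x. ennreal c * indicator (ball y r) x) \<in> borel_measurable lebesgue" for y :: 'a and r c
    by (intro borel_measurable_times_ennreal ind_meas borel_measurable_const)
  obtain N where N: "\<And>(y::'a) R. 0 < R \<Longrightarrow> \<rho> (indicator (ball y (2*R))) \<le> of_nat N * \<rho> (indicator (ball 0 R))"
    using bfn_cover[OF bfn ti] by blast
  define g where "g r = r * \<phi> r" for r
  have Pfacts: "\<exists>p>0. \<rho> (indicator (ball (0::'a) r)) = ennreal p" if r: "0 < r" for r
  proof -
    have "0 < \<rho> (indicator (ball (0::'a) r))" by (rule bfn_ball_pos[OF bfn r])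
    moreover have "\<rho> (indicator (ball (0::'a) r)) < \<infinity>" by (rule bfn_ball_fin[OF bfn])
    ultimately show ?thesis
      by (metis ennreal_cases ennreal_less_zero_iff infinity_ennreal_def less_irrefl)
  qed
  have wup: "w x \<le> ennreal (C\<^sub>1 * exp (g (t + s)))"
    if "0 < s" "s + 1 \<le> t" "2 * s / t \<le> \<gamma>" "norm (x - t *\<^sub>R \<theta>) < s" for x s t
  proof -
    from cone[OF theta that(1) _ that(3) that(4)] that
    have c: "t - s < norm x" "norm x < t + s" "norm (x /\<^sub>R norm x - \<theta>) < \<gamma>" by auto
    have n1: "1 \<le> norm x" using c that by linarith
    have "w x \<le> ennreal (C\<^sub>1 * exp (norm x * \<phi> (norm x)))" using w_bounds[OF n1 c(3)] by blast
    also have "\<dots> \<le> ennreal (C\<^sub>1 * exp (g (t + s)))"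
      using rphi_mono[OF n1, of "t + s"] c C1 by (intro ennreal_leI mult_left_mono) (auto simp: g_def)
    finally show ?thesis .
  qed
  have wlo: "ennreal (C\<^sub>0 * exp (g (t - s))) \<le> w x"
    if "0 < s" "s + 1 \<le> t" "2 * s / t \<le> \<gamma>" "norm (x - t *\<^sub>R \<theta>) < s" for x s t
  proof -
    from cone[OF theta that(1) _ that(3) that(4)] that
    have c: "t - s < norm x" "norm x < t + s" "norm (x /\<^sub>R norm x - \<theta>) < \<gamma>" by auto
    have n1: "1 \<le> norm x" using c that by linarith
    have "ennreal (C\<^sub>0 * exp (g (t - s))) \<le> ennreal (C\<^sub>0 * exp (norm x * \<phi> (norm x)))"
      using rphi_mono[of "t - s" "norm x"] c C0 that by (intro ennreal_leI mult_left_mono) (auto simp: g_def)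
    also have "\<dots> \<le> w x" using w_bounds[OF n1 c(3)] by blast
    finally show ?thesis .
  qed
  define B where "B = ennreal (C\<^sub>1 * exp 1 * real N / C\<^sub>0)"
  have key: "(INF y. \<rho> (\<lambda>x. indicator (ball y (2 * R)) x * w x) / \<rho> (\<lambda>x. indicator (ball y R) x * w x)) \<le> B"
    if R: "1 \<le> R" for R
  proof -
    define s where "s = 2 * R"
    have s0: "0 < s" using R by (simp add: s_def)
    have "\<forall>\<^sub>F u in at_top. \<phi> u < 1 / (2 * s)"
      using order_tendstoD(2)[OF phi_lim] s0 by simp
    then obtain U where U: "\<And>u. u \<ge> U \<Longrightarrow> \<phi> u < 1 / (2 * s)" by (auto simp: eventually_at_top_linorder)
    define t where "t = max (s + 1) (max (2 * s / \<gamma>) (U + s))"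
    have t1: "s + 1 \<le> t" and t2: "2 * s / \<gamma> \<le> t" and t3: "U \<le> t - s" by (auto simp: t_def)
    have tpos: "0 < t" using t1 s0 by linarith
    have tg: "2 * s / t \<le> \<gamma>" using t2 tpos gam by (simp add: divide_le_eq mult.commute pos_divide_le_eq)
    define y where "y = t *\<^sub>R \<theta>"
    have inb: "norm (x - t *\<^sub>R \<theta>) < s" if "x \<in> ball y s" for x
      using that by (simp add: y_def dist_norm norm_minus_commute)
    define Ep where "Ep = exp (g (t + s))"
    define Em where "Em = exp (g (t - s))"
    have gap: "g (t + s) \<le> g (t - s) + 1"
    proof -
      have ph: "\<phi> (t + s) \<le> \<phi> (t - s)" using phi_mono[of "t - s" "t + s"] t1 s0 by simp
      have "g (t + s) = (t + s) * \<phi> (t + s)" by (simp add: g_def)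
      also have "\<dots> \<le> (t + s) * \<phi> (t - s)" using ph t1 s0 by (intro mult_left_mono) auto
      also have "\<dots> = g (t - s) + 2 * s * \<phi> (t - s)" by (simp add: g_def algebra_simps)
      also have "2 * s * \<phi> (t - s) \<le> 1"
      proof -
        have "\<phi> (t - s) < 1 / (2 * s)" using U t3 by blast
        hence "2 * s * \<phi> (t - s) < 2 * s * (1 / (2 * s))" using s0 by (intro mult_strict_left_mono) auto
        thus ?thesis using s0 by simp
      qed
      finally show ?thesis by simp
    qed
    have EpEm: "Ep \<le> exp 1 * Em"
    proof -
      have "exp (g (t + s)) \<le> exp (g (t - s) + 1)" using gap by (simp only: exp_le_cancel_iff)
      also have "\<dots> = exp 1 * exp (g (t - s))" by (simp only: exp_add mult.commute)
      finally show ?thesis unfolding Ep_def Em_def .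
    qed
    have R0: "0 < R" using R by simp
    obtain p where p: "0 < p" "\<rho> (indicator (ball (0::'a) R)) = ennreal p" using Pfacts[OF R0] by blast
    have Py: "\<rho> (indicator (ball y R)) = ennreal p" using bfn_trans[OF bfn ti, of y R] p(2) by (rule trans)
    have "\<rho> (\<lambda>x. indicator (ball y s) x * w x) \<le> \<rho> (\<lambda>x. ennreal (C\<^sub>1 * Ep) * indicator (ball y s) x)"
    proof (rule bfn_mono[OF bfn mc mw])
      fix x show "indicator (ball y s) x * w x \<le> ennreal (C\<^sub>1 * Ep) * indicator (ball y s) x"
        using wup[OF s0 t1 tg inb] by (cases "x \<in> ball y s") (auto simp: Ep_def)
    qed
    also have "\<dots> = ennreal (C\<^sub>1 * Ep) * \<rho> (indicator (ball y s))"
      by (rule bfn_hom[OF bfn ind_meas]) (use C1 in \<open>simp add: Ep_def\<close>)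
    also have "\<dots> \<le> ennreal (C\<^sub>1 * Ep) * (of_nat N * ennreal p)"
      using N[of R y] R p by (intro mult_left_mono) (auto simp: s_def)
    also have "\<dots> = ennreal (C\<^sub>1 * Ep * real N * p)"
      using C1 p by (simp add: ennreal_mult ennreal_of_nat_eq_real_of_nat Ep_def mult.assoc)
    finally have up: "\<rho> (\<lambda>x. indicator (ball y s) x * w x) \<le> ennreal (C\<^sub>1 * Ep * real N * p)" .
    have "\<rho> (\<lambda>x. ennreal (C\<^sub>0 * Em) * indicator (ball y R) x) \<le> \<rho> (\<lambda>x. indicator (ball y R) x * w x)"
    proof (rule bfn_mono[OF bfn mw mc])
      fix x
      have "x \<in> ball y R \<Longrightarrow> x \<in> ball y s" using R by (auto simp: s_def)
      then show "ennreal (C\<^sub>0 * Em) * indicator (ball y R) x \<le> indicator (ball y R) x * w x"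
        using wlo[OF s0 t1 tg inb] by (cases "x \<in> ball y R") (auto simp: Em_def)
    qed
    moreover have "\<rho> (\<lambda>x. ennreal (C\<^sub>0 * Em) * indicator (ball y R) x) = ennreal (C\<^sub>0 * Em * p)"
      using bfn_hom[OF bfn ind_meas, of "C\<^sub>0 * Em" y R] Py C0 p
      by (simp add: Em_def ennreal_mult)
    ultimately have lo: "ennreal (C\<^sub>0 * Em * p) \<le> \<rho> (\<lambda>x. indicator (ball y R) x * w x)" by simp
    have pos: "0 < ennreal (C\<^sub>0 * Em * p)" using C0 p by (simp add: Em_def)
    have fin: "\<rho> (\<lambda>x. indicator (ball y s) x * w x) < \<infinity>"
      using up ennreal_less_top[of "C\<^sub>1 * Ep * real N * p"] unfolding infinity_ennreal_def by (rule le_less_trans)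
    have Bge: "ennreal (C\<^sub>1 * Ep * real N * p) \<le> ennreal (C\<^sub>1 * exp 1 * real N / C\<^sub>0) * ennreal (C\<^sub>0 * Em * p)"
    proof -
      have "C\<^sub>1 * Ep * real N * p \<le> C\<^sub>1 * (exp 1 * Em) * real N * p"
        using EpEm C1 p by (intro mult_right_mono mult_left_mono) auto
      also have "\<dots> = (C\<^sub>1 * exp 1 * real N / C\<^sub>0) * (C\<^sub>0 * Em * p)" using C0 by (simp add: field_simps)
      finally have le: "C\<^sub>1 * Ep * real N * p \<le> (C\<^sub>1 * exp 1 * real N / C\<^sub>0) * (C\<^sub>0 * Em * p)" .
      have "ennreal (C\<^sub>1 * exp 1 * real N / C\<^sub>0) * ennreal (C\<^sub>0 * Em * p)
          = ennreal ((C\<^sub>1 * exp 1 * real N / C\<^sub>0) * (C\<^sub>0 * Em * p))"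
        by (rule ennreal_mult[symmetric]) (use C0 C1 p in \<open>auto simp: Em_def\<close>)
      thus ?thesis using ennreal_leI[OF le] by simp
    qed
    have "\<rho> (\<lambda>x. indicator (ball y (2 * R)) x * w x) / \<rho> (\<lambda>x. indicator (ball y R) x * w x) \<le> B"
      unfolding B_def s_def[symmetric]
    proof (rule div_le[OF fin])
      show "0 < \<rho> (\<lambda>x. indicator (ball y R) x * w x)" using pos lo by (rule less_le_trans)
      show "\<rho> (\<lambda>x. indicator (ball y s) x * w x) \<le> ennreal (C\<^sub>1 * exp 1 * real N / C\<^sub>0) * \<rho> (\<lambda>x. indicator (ball y R) x * w x)"
        using up Bge mult_left_mono[OF lo, of "ennreal (C\<^sub>1 * exp 1 * real N / C\<^sub>0)"]
        by (meson order_trans zero_le)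
    qed
    thus ?thesis by (rule INF_lower2[OF UNIV_I])
  qed
  have wd: "weak_doubling (\<lambda>g. \<rho> (\<lambda>x. g x * w x))"
    unfolding weak_doubling_def
  proof (intro exI conjI)
    show "(1::real) < 2" by simp
    have "Liminf at_top (\<lambda>R::real. INF y. \<rho> (\<lambda>x. indicator (ball y (2 * R)) x * w x) / \<rho> (\<lambda>x. indicator (ball y R) x * w x))
        \<le> Limsup at_top (\<lambda>R::real. INF y. \<rho> (\<lambda>x. indicator (ball y (2 * R)) x * w x) / \<rho> (\<lambda>x. indicator (ball y R) x * w x))"
      by (rule Liminf_le_Limsup) simp
    also have "\<dots> \<le> B"
      by (rule Limsup_bounded) (rule eventually_mono[OF eventually_ge_at_top[of "1::real"] key])
    also have "\<dots> < \<infinity>" by (simp add: B_def)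
    finally show "Liminf at_top (\<lambda>R::real. INF y. \<rho> (\<lambda>x. indicator (ball y (2 * R)) x * w x) / \<rho> (\<lambda>x. indicator (ball y R) x * w x)) < \<infinity>" .
  qed
  obtain p1 where p1: "0 < p1" "\<rho> (indicator (ball (0::'a) 1)) = ennreal p1" using Pfacts[OF zero_less_one] by blast
  define C where "C = C\<^sub>0 * p1 * exp (- 2 * \<phi> 1)"
  have Cpos: "C > 0" using C0 p1 by (simp add: C_def)
  have "\<forall>\<^sub>F R in at_top. \<rho> (\<lambda>x. indicator (ball 0 R) x * w x) \<ge> ennreal (C * exp (R * \<phi> R))"
    using eventually_ge_at_top[of "max 3 (2 / \<gamma> + 2)"]
  proof eventually_elim
    case (elim R)
    hence R3: "3 \<le> R" and Rg: "2 / \<gamma> + 2 \<le> R" by auto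
    define t where "t = R - 1"
    have t1: "(1::real) + 1 \<le> t" using R3 by (simp add: t_def)
    have tg: "2 * 1 / t \<le> \<gamma>"
    proof -
      have "2 / \<gamma> \<le> t" using Rg by (simp add: t_def)
      thus ?thesis using gam t1 by (simp add: divide_le_eq mult.commute pos_divide_le_eq)
    qed
    define y where "y = t *\<^sub>R \<theta>"
    have inb: "norm (x - t *\<^sub>R \<theta>) < 1" if "x \<in> ball y 1" for x
      using that by (simp add: y_def dist_norm norm_minus_commute)
    have sub: "x \<in> ball 0 R" if "x \<in> ball y 1" for x
    proof -
      have "norm x < t + 1" using cone[OF theta _ _ tg inb[OF that]] t1 by auto
      thus ?thesis by (simp add: t_def)
    qed
    define Em where "Em = exp (g (t - 1))"
    have "ennreal (C\<^sub>0 * Em * p1) = \<rho> (\<lambda>x. ennreal (C\<^sub>0 * Em) * indicator (ball y 1) x)"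
      using bfn_hom[OF bfn ind_meas, of "C\<^sub>0 * Em" y 1] bfn_trans[OF bfn ti, of y 1] C0 p1
      by (simp add: Em_def ennreal_mult)
    also have "\<dots> \<le> \<rho> (\<lambda>x. indicator (ball 0 R) x * w x)"
    proof (rule bfn_mono[OF bfn mw mc])
      fix x
      show "ennreal (C\<^sub>0 * Em) * indicator (ball y 1) x \<le> indicator (ball 0 R) x * w x"
        using wlo[OF _ t1 tg inb] sub by (cases "x \<in> ball y 1") (auto simp: Em_def)
    qed
    finally have lo: "ennreal (C\<^sub>0 * Em * p1) \<le> \<rho> (\<lambda>x. indicator (ball 0 R) x * w x)" .
    have "R * \<phi> R - 2 * \<phi> 1 \<le> g (t - 1)"
    proof -
      have a: "\<phi> R \<le> \<phi> (R - 2)" using phi_mono[of "R - 2" R] R3 by simp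
      have b: "\<phi> (R - 2) \<le> \<phi> 1" using phi_mono[of 1 "R - 2"] R3 by simp
      have "R * \<phi> R \<le> R * \<phi> (R - 2)" using a R3 by (intro mult_left_mono) auto
      also have "\<dots> = g (R - 2) + 2 * \<phi> (R - 2)" by (simp add: g_def algebra_simps)
      finally show ?thesis using b by (simp add: t_def)
    qed
    hence "C * exp (R * \<phi> R) \<le> C\<^sub>0 * Em * p1"
    proof -
      assume h: "R * \<phi> R - 2 * \<phi> 1 \<le> g (t - 1)"
      have "C * exp (R * \<phi> R) = C\<^sub>0 * p1 * exp (R * \<phi> R - 2 * \<phi> 1)"
        by (simp add: C_def exp_diff exp_minus field_simps)
      also have "\<dots> \<le> C\<^sub>0 * p1 * Em" unfolding Em_def using h C0 p1
        by (intro mult_left_mono) auto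
      finally show ?thesis by (simp add: mult_ac)
    qed
    hence "ennreal (C * exp (R * \<phi> R)) \<le> ennreal (C\<^sub>0 * Em * p1)" by (rule ennreal_leI)
    then show ?case using lo by (rule order_trans)
  qed
  with wd Cpos show ?thesis by blast
qed

end
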